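(* Let $(\Omega,\Sigma,\mathbb{P}_0)$ be a probability space, $\mathbb{L}^2=\mathbb{L}^2(\Omega,\Sigma,\mathbb{P}_0)$, and $n\ge 2$ an integer. Then $\mathrm{MAXVAR}_n$ is an averse risk measure, i.e. it satisfies: (A1) $\mathrm{MAXVAR}_n(C)=C$ for every constant $C$; (A2) $\mathrm{MAXVAR}_n(\lambda X+(1-\lambda)Y)\le \lambda\,\mathrm{MAXVAR}_n(X)+(1-\lambda)\,\mathrm{MAXVAR}_n(Y)$ for all $X,Y\in\mathbb{L}^2$, $\lambda\in[0,1]$; (A4) if $\|X^k-X\|_2\to0$ and $\mathrm{MAXVAR}_n(X^k)\le 0$ for all $k$, then $\mathrm{MAXVAR}_n(X)\le0$; (A5) $\mathrm{MAXVAR}_n(\lambda X)=\lambda\,\mathrm{MAXVAR}_n(X)$ for all $\lambda>0$, $X\in\mathbb{L}^2$; (A6) $\mathrm{MAXVAR}_n(X)>\mathbb{E}(X)$ for every non-constant $X\in\mathbb{L}^2$.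
   Context: For $X\in\mathbb{L}^2$, $\mathrm{MAXVAR}_n(X)=\mathbb{E}(\max\{X_1,\dots,X_n\})$, where $X_1,\dots,X_n$ are independent random variables each with the same distribution as $X$ (the value depends only on the distribution of $X$). "Non-constant" means not almost surely equal to a constant. *)

theory Defs
  imports "HOL-Probability.Probability"
begin

definition L2 :: "'a measure \<Rightarrow> ('a \<Rightarrow> real) set" where
  "L2 M = {X. X \<in> borel_measurable M \<and> integrable M (\<lambda>w. (X w)^2)}"

text \<open>MAXVAR_n(X) = E(max(X_1,...,X_n)) with X_i iid copies of X: computed on the
  product of n copies of the distribution of X.\<close>
definition MAXVAR :: "nat \<Rightarrow> 'a measure \<Rightarrow> ('a \<Rightarrow> real) \<Rightarrow> real" where
  "MAXVAR n M X = integral\<^sup>L (PiM {..<n} (\<lambda>_. distr M borel X)) (\<lambda>x. Max (x ` {..<n}))"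

end

theory Submission imports Defs begin

lemma Max_diff_le:
  fixes f g :: "nat \<Rightarrow> real"
  assumes "finite I" "I \<noteq> {}"
  shows "Max (f ` I) - Max (g ` I) \<le> (\<Sum>i\<in>I. \<bar>f i - g i\<bar>)"
proof -
  obtain i where i: "i \<in> I" "Max (f ` I) = f i"
  proof -
    have "Max (f ` I) \<in> f ` I" using Max_in[of "f ` I"] assms by auto
    then show ?thesis using that by auto
  qed
  have "g i \<le> Max (g ` I)" using i assms by auto
  moreover have "\<bar>f i - g i\<bar> \<le> (\<Sum>i\<in>I. \<bar>f i - g i\<bar>)"
    by (rule member_le_sum) (use i assms in auto)
  ultimately show ?thesis using i by linarith
qed

lemma Max_abs_diff_le:
  fixes f g :: "nat \<Rightarrow> real"
  assumes "finite I" "I \<noteq> {}"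
  shows "\<bar>Max (f ` I) - Max (g ` I)\<bar> \<le> (\<Sum>i\<in>I. \<bar>f i - g i\<bar>)"
  using Max_diff_le[OF assms, of f g] Max_diff_le[OF assms, of g f]
  by (simp add: abs_minus_commute)

lemma Max_abs_le:
  fixes f :: "nat \<Rightarrow> real"
  assumes "finite I" "I \<noteq> {}"
  shows "\<bar>Max (f ` I)\<bar> \<le> (\<Sum>i\<in>I. \<bar>f i\<bar>)"
proof -
  have "Max ((\<lambda>_. 0::real) ` I) = 0" using assms by simp
  then show ?thesis using Max_abs_diff_le[OF assms, of f "\<lambda>_. 0"] by simp
qed

lemma maxvar_eq:
  fixes n :: nat
  assumes "prob_space M" and X[measurable]: "X \<in> borel_measurable M"
  shows "MAXVAR n M X = integral\<^sup>L (PiM {..<n} (\<lambda>_. M)) (\<lambda>\<omega>. Max ((\<lambda>i. X (\<omega> i)) ` {..<n}))"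
proof -
  define D where "D = distr M borel X"
  have pD: "prob_space D" unfolding D_def by (rule prob_space.prob_space_distr[OF assms(1) X])
  have sD: "sets D = sets borel" by (simp add: D_def)
  have XD: "X \<in> measurable M D" using X by (simp add: measurable_cong_sets[OF refl sD])
  have "distr (PiM {..<n} (\<lambda>_. M)) (PiM {..<n} (\<lambda>_. D)) (compose {..<n} X)
      = PiM {..<n} (\<lambda>i. distr M D X)"
    by (rule distr_PiM_finite_prob_space') (use assms pD XD in auto)
  also have "distr M D X = D" unfolding D_def by (rule distr_cong) auto
  finally have eq: "distr (PiM {..<n} (\<lambda>_. M)) (PiM {..<n} (\<lambda>_. D)) (compose {..<n} X) = PiM {..<n} (\<lambda>_. D)" .
  have cm: "compose {..<n} X \<in> measurable (PiM {..<n} (\<lambda>_. M)) (PiM {..<n} (\<lambda>_. D))"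
    unfolding compose_def
  proof (rule measurable_restrict)
    fix i assume "i \<in> {..<n}"
    have "(\<lambda>\<omega>. \<omega> i) \<in> measurable (PiM {..<n} (\<lambda>_. M)) M"
      using \<open>i \<in> {..<n}\<close> by (rule measurable_component_singleton)
    then show "(\<lambda>\<omega>. X (\<omega> i)) \<in> measurable (PiM {..<n} (\<lambda>_. M)) D"
      using XD by (rule measurable_compose)
  qed
  have mm: "(\<lambda>x. Max ((\<lambda>i. x i) ` {..<n})) \<in> borel_measurable (PiM {..<n} (\<lambda>_. D))"
  proof (rule borel_measurable_Max)
    fix i assume "i \<in> {..<n}"
    then have "(\<lambda>x. x i) \<in> measurable (PiM {..<n} (\<lambda>_. D)) D" by (rule measurable_component_singleton)
    then show "(\<lambda>x. x i) \<in> borel_measurable (PiM {..<n} (\<lambda>_. D))"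
      by (simp add: measurable_cong_sets[OF refl sD])
  qed simp
  have "MAXVAR n M X = integral\<^sup>L (PiM {..<n} (\<lambda>_. D)) (\<lambda>x. Max ((\<lambda>i. x i) ` {..<n}))"
    by (simp add: MAXVAR_def D_def)
  also have "\<dots> = integral\<^sup>L (distr (PiM {..<n} (\<lambda>_. M)) (PiM {..<n} (\<lambda>_. D)) (compose {..<n} X)) (\<lambda>x. Max ((\<lambda>i. x i) ` {..<n}))"
    by (simp add: eq)
  also have "\<dots> = integral\<^sup>L (PiM {..<n} (\<lambda>_. M)) (\<lambda>\<omega>. Max ((\<lambda>i. compose {..<n} X \<omega> i) ` {..<n}))"
    by (rule integral_distr[OF cm mm])
  also have "\<dots> = integral\<^sup>L (PiM {..<n} (\<lambda>_. M)) (\<lambda>\<omega>. Max ((\<lambda>i. X (\<omega> i)) ` {..<n}))"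
    by (intro Bochner_Integration.integral_cong refl arg_cong[where f=Max] image_cong) (auto simp: compose_def)
  finally show ?thesis .
qed

lemma comp_integral:
  fixes f :: "'a \<Rightarrow> real" and n :: nat
  assumes "prob_space M" "i < n" and f[measurable]: "f \<in> borel_measurable M"
  shows "integral\<^sup>L (PiM {..<n} (\<lambda>_. M)) (\<lambda>\<omega>. f (\<omega> i)) = integral\<^sup>L M f"
    and "integrable (PiM {..<n} (\<lambda>_. M)) (\<lambda>\<omega>. f (\<omega> i)) \<longleftrightarrow> integrable M f"
proof -
  have d: "distr (PiM {..<n} (\<lambda>_. M)) M (\<lambda>\<omega>. \<omega> i) = M"
    using distr_PiM_component[of "{..<n}" "\<lambda>_. M" i] assms by auto
  have m: "(\<lambda>\<omega>. \<omega> i) \<in> measurable (PiM {..<n} (\<lambda>_. M)) M"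
    using assms by (intro measurable_component_singleton) auto
  show "integral\<^sup>L (PiM {..<n} (\<lambda>_. M)) (\<lambda>\<omega>. f (\<omega> i)) = integral\<^sup>L M f"
    using integral_distr[OF m f] d by simp
  show "integrable (PiM {..<n} (\<lambda>_. M)) (\<lambda>\<omega>. f (\<omega> i)) \<longleftrightarrow> integrable M f"
    using integrable_distr_eq[OF m f] d by simp
qed

lemma comp_meas:
  fixes f :: "'a \<Rightarrow> real" and n :: nat
  assumes "i < n" and f[measurable]: "f \<in> borel_measurable M"
  shows "(\<lambda>\<omega>. f (\<omega> i)) \<in> borel_measurable (PiM {..<n} (\<lambda>_. M))"
proof -
  have m: "(\<lambda>\<omega>. \<omega> i) \<in> measurable (PiM {..<n} (\<lambda>_. M)) M"
    using assms by (intro measurable_component_singleton) auto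
  show ?thesis using measurable_compose[OF m f] .
qed

lemma max_meas:
  fixes f :: "'a \<Rightarrow> real" and n :: nat
  assumes f[measurable]: "f \<in> borel_measurable M"
  shows "(\<lambda>\<omega>. Max ((\<lambda>i. f (\<omega> i)) ` {..<n})) \<in> borel_measurable (PiM {..<n} (\<lambda>_. M))"
  by (rule borel_measurable_Max[OF finite_lessThan]) (rule comp_meas[OF _ f], simp)

lemma max_integrable:
  fixes f :: "'a \<Rightarrow> real" and n :: nat
  assumes "prob_space M" "0 < n" and f[measurable]: "f \<in> borel_measurable M" and "integrable M f"
  shows "integrable (PiM {..<n} (\<lambda>_. M)) (\<lambda>\<omega>. Max ((\<lambda>i. f (\<omega> i)) ` {..<n}))"
proof (rule Bochner_Integration.integrable_bound)
  show "integrable (PiM {..<n} (\<lambda>_. M)) (\<lambda>\<omega>. (\<Sum>i\<in>{..<n}. \<bar>f (\<omega> i)\<bar>))"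
    using assms comp_integral(2)[OF assms(1), of _ n "\<lambda>x. \<bar>f x\<bar>"] by auto
  show "(\<lambda>\<omega>. Max ((\<lambda>i. f (\<omega> i)) ` {..<n})) \<in> borel_measurable (PiM {..<n} (\<lambda>_. M))"
    by (rule max_meas[OF f])
  show "AE x in PiM {..<n} (\<lambda>_. M). norm (Max ((\<lambda>i. f (x i)) ` {..<n})) \<le> norm (\<Sum>i\<in>{..<n}. \<bar>f (x i)\<bar>)"
    using Max_abs_le[of "{..<n}"] assms(2) by (auto intro!: AE_I2 order_trans[OF _ abs_ge_self])
qed

lemma L1_le_L2:
  fixes f :: "'a \<Rightarrow> real" and n :: nat
  assumes "prob_space M" and f[measurable]: "f \<in> borel_measurable M"
    and sq: "integrable M (\<lambda>x. (f x)^2)"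
  shows "integral\<^sup>L M (\<lambda>x. \<bar>f x\<bar>) \<le> sqrt (integral\<^sup>L M (\<lambda>x. (f x)^2))"
proof -
  interpret prob_space M by fact
  have fi: "integrable M f" by (rule square_integrable_imp_integrable[OF f sq])
  have ai: "integrable M (\<lambda>x. \<bar>f x\<bar>)" using fi by auto
  define c where "c = integral\<^sup>L M (\<lambda>x. \<bar>f x\<bar>)"
  have c0: "0 \<le> c" unfolding c_def by simp
  have "0 \<le> integral\<^sup>L M (\<lambda>x. (\<bar>f x\<bar> - c)^2)" by simp
  also have "integral\<^sup>L M (\<lambda>x. (\<bar>f x\<bar> - c)^2) = integral\<^sup>L M (\<lambda>x. (f x)^2 - 2 * c * \<bar>f x\<bar> + c^2)"
    by (intro Bochner_Integration.integral_cong refl) (simp add: power2_diff)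
  also have "\<dots> = integral\<^sup>L M (\<lambda>x. (f x)^2) - 2 * c * c + c^2"
    using sq ai by (simp add: c_def prob_space)
  finally have "c^2 \<le> integral\<^sup>L M (\<lambda>x. (f x)^2)" by (simp add: power2_eq_square)
  then show ?thesis unfolding c_def[symmetric] using c0 by (simp add: real_le_rsqrt)
qed

lemma Max_comb_le:
  fixes a b :: "nat \<Rightarrow> real"
  assumes "finite I" "I \<noteq> {}" "0 \<le> l" "l \<le> 1"
  shows "Max ((\<lambda>i. l * a i + (1 - l) * b i) ` I) \<le> l * Max (a ` I) + (1 - l) * Max (b ` I)"
proof -
  have "l * a i + (1 - l) * b i \<le> l * Max (a ` I) + (1 - l) * Max (b ` I)" if "i \<in> I" for i
  proof -
    have "a i \<le> Max (a ` I)" "b i \<le> Max (b ` I)" using that assms by auto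
    then show ?thesis using assms by (intro add_mono mult_left_mono) auto
  qed
  then show ?thesis using assms by (subst Max_le_iff) auto
qed

lemma sq_diff_le: "((a::real) - b)^2 \<le> 2 * a^2 + 2 * b^2"
proof -
  have "0 \<le> (a + b)^2" by simp
  then show ?thesis by (simp add: power2_diff power2_sum)
qed

lemma L2_facts:
  assumes "prob_space M" "X \<in> L2 M"
  shows "X \<in> borel_measurable M" "integrable M (\<lambda>w. (X w)^2)" "integrable M X"
proof -
  show m: "X \<in> borel_measurable M" and s: "integrable M (\<lambda>w. (X w)^2)" using assms by (auto simp: L2_def)
  interpret prob_space M by fact
  show "integrable M X" using square_integrable_imp_integrable[OF m s] .
qed

theorem theorem2:
  fixes M :: "'a measure" and n :: nat
  assumes "prob_space M" and "n \<ge> 2"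
  shows "(\<forall>C::real. MAXVAR n M (\<lambda>_. C) = C)
    \<and> (\<forall>X\<in>L2 M. \<forall>Y\<in>L2 M. \<forall>l::real. 0 \<le> l \<and> l \<le> 1 \<longrightarrow>
          MAXVAR n M (\<lambda>w. l * X w + (1 - l) * Y w)
            \<le> l * MAXVAR n M X + (1 - l) * MAXVAR n M Y)
    \<and> (\<forall>X\<in>L2 M. \<forall>Xk::nat \<Rightarrow> 'a \<Rightarrow> real. (\<forall>k. Xk k \<in> L2 M) \<and>
          ((\<lambda>k. sqrt (integral\<^sup>L M (\<lambda>w. (Xk k w - X w)^2))) \<longlonglongrightarrow> 0) \<and>
          (\<forall>k. MAXVAR n M (Xk k) \<le> 0) \<longrightarrow> MAXVAR n M X \<le> 0)
    \<and> (\<forall>X\<in>L2 M. \<forall>l::real. l > 0 \<longrightarrow> MAXVAR n M (\<lambda>w. l * X w) = l * MAXVAR n M X)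
    \<and> (\<forall>X\<in>L2 M. \<not> (\<exists>c. AE w in M. X w = c) \<longrightarrow>
          MAXVAR n M X > integral\<^sup>L M X)"
proof -
  interpret prob_space M by fact
  let ?P = "PiM {..<n} (\<lambda>_. M)"
  have pP: "prob_space ?P" by (rule prob_space_PiM) (use assms(1) in auto)
  have n0: "0 < n" "{..<n} \<noteq> {}" using assms(2) by (auto simp: lessThan_empty_iff)
  note L2F = L2_facts[OF assms(1)]
  have A1: "\<forall>C::real. MAXVAR n M (\<lambda>_. C) = C"
  proof
    fix C :: real
    have "MAXVAR n M (\<lambda>_. C) = integral\<^sup>L ?P (\<lambda>\<omega>. Max ((\<lambda>i. C) ` {..<n}))"
      by (rule maxvar_eq[OF assms(1)]) simp
    also have "\<dots> = integral\<^sup>L ?P (\<lambda>\<omega>. C)" using n0 by simp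
    also have "\<dots> = C" using prob_space.prob_space[OF pP] by simp
    finally show "MAXVAR n M (\<lambda>_. C) = C" .
  qed
  have A2: "\<forall>X\<in>L2 M. \<forall>Y\<in>L2 M. \<forall>l::real. 0 \<le> l \<and> l \<le> 1 \<longrightarrow>
          MAXVAR n M (\<lambda>w. l * X w + (1 - l) * Y w)
            \<le> l * MAXVAR n M X + (1 - l) * MAXVAR n M Y"
  proof (intro ballI allI impI)
    fix X Y and l :: real assume X: "X \<in> L2 M" and Y: "Y \<in> L2 M" and l: "0 \<le> l \<and> l \<le> 1"
    note Xm[measurable] = L2F(1)[OF X] and Ym[measurable] = L2F(1)[OF Y]
    have Xi: "integrable M X" and Yi: "integrable M Y" using L2F(3) X Y by auto
    have Zm: "(\<lambda>w. l * X w + (1 - l) * Y w) \<in> borel_measurable M" by measurable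
    have "MAXVAR n M (\<lambda>w. l * X w + (1 - l) * Y w)
        = integral\<^sup>L ?P (\<lambda>\<omega>. Max ((\<lambda>i. l * X (\<omega> i) + (1 - l) * Y (\<omega> i)) ` {..<n}))"
      by (rule maxvar_eq[OF assms(1) Zm])
    also have "\<dots> \<le> integral\<^sup>L ?P (\<lambda>\<omega>. l * Max ((\<lambda>i. X (\<omega> i)) ` {..<n}) + (1 - l) * Max ((\<lambda>i. Y (\<omega> i)) ` {..<n}))"
    proof (rule integral_mono)
      show "integrable ?P (\<lambda>\<omega>. Max ((\<lambda>i. l * X (\<omega> i) + (1 - l) * Y (\<omega> i)) ` {..<n}))"
        using max_integrable[OF assms(1) n0(1) Zm] Xi Yi by auto
      show "integrable ?P (\<lambda>\<omega>. l * Max ((\<lambda>i. X (\<omega> i)) ` {..<n}) + (1 - l) * Max ((\<lambda>i. Y (\<omega> i)) ` {..<n}))"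
        using max_integrable[OF assms(1) n0(1) Xm Xi] max_integrable[OF assms(1) n0(1) Ym Yi] by auto
      show "Max ((\<lambda>i. l * X (\<omega> i) + (1 - l) * Y (\<omega> i)) ` {..<n}) \<le> l * Max ((\<lambda>i. X (\<omega> i)) ` {..<n}) + (1 - l) * Max ((\<lambda>i. Y (\<omega> i)) ` {..<n})" for \<omega>
        using Max_comb_le[of "{..<n}" l "\<lambda>i. X (\<omega> i)" "\<lambda>i. Y (\<omega> i)"] n0 l by auto
    qed
    also have "\<dots> = l * MAXVAR n M X + (1 - l) * MAXVAR n M Y"
      using max_integrable[OF assms(1) n0(1) Xm Xi] max_integrable[OF assms(1) n0(1) Ym Yi]
      by (simp add: maxvar_eq[OF assms(1) Xm] maxvar_eq[OF assms(1) Ym])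
    finally show "MAXVAR n M (\<lambda>w. l * X w + (1 - l) * Y w) \<le> l * MAXVAR n M X + (1 - l) * MAXVAR n M Y" .
  qed
  have A5: "\<forall>X\<in>L2 M. \<forall>l::real. l > 0 \<longrightarrow> MAXVAR n M (\<lambda>w. l * X w) = l * MAXVAR n M X"
  proof (intro ballI allI impI)
    fix X l assume X: "X \<in> L2 M" and l: "(l::real) > 0"
    note Xm[measurable] = L2F(1)[OF X]
    have Zm: "(\<lambda>w. l * X w) \<in> borel_measurable M" by measurable
    have mono: "mono ((*) l)" using l by (auto intro: monoI mult_left_mono)
    have eq: "Max ((\<lambda>i. l * X (\<omega> i)) ` {..<n}) = l * Max ((\<lambda>i. X (\<omega> i)) ` {..<n})" for \<omega>
      using mono_Max_commute[OF mono, of "(\<lambda>i. X (\<omega> i)) ` {..<n}"] n0 by (simp add: image_image)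
    show "MAXVAR n M (\<lambda>w. l * X w) = l * MAXVAR n M X"
      by (simp add: maxvar_eq[OF assms(1) Zm] maxvar_eq[OF assms(1) Xm] eq)
  qed
  have A4: "\<forall>X\<in>L2 M. \<forall>Xk::nat \<Rightarrow> 'a \<Rightarrow> real. (\<forall>k. Xk k \<in> L2 M) \<and>
          ((\<lambda>k. sqrt (integral\<^sup>L M (\<lambda>w. (Xk k w - X w)^2))) \<longlonglongrightarrow> 0) \<and>
          (\<forall>k. MAXVAR n M (Xk k) \<le> 0) \<longrightarrow> MAXVAR n M X \<le> 0"
  proof (intro ballI allI impI)
    fix X and Xk :: "nat \<Rightarrow> 'a \<Rightarrow> real"
    assume X: "X \<in> L2 M" and H: "(\<forall>k. Xk k \<in> L2 M) \<and>
          ((\<lambda>k. sqrt (integral\<^sup>L M (\<lambda>w. (Xk k w - X w)^2))) \<longlonglongrightarrow> 0) \<and>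
          (\<forall>k. MAXVAR n M (Xk k) \<le> 0)"
    note Xm[measurable] = L2F(1)[OF X]
    have Xi: "integrable M X" using L2F(3) X by auto
    have bound: "MAXVAR n M X \<le> real n * sqrt (integral\<^sup>L M (\<lambda>w. (Xk k w - X w)^2))" for k
    proof -
      have Yk: "Xk k \<in> L2 M" using H by auto
      note Ym[measurable] = L2F(1)[OF Yk]
      have Yi: "integrable M (Xk k)" using L2F(3) Yk by auto
      have dm[measurable]: "(\<lambda>w. Xk k w - X w) \<in> borel_measurable M" by measurable
      have di: "integrable M (\<lambda>w. \<bar>Xk k w - X w\<bar>)" using Xi Yi by auto
      have sqi: "integrable M (\<lambda>w. (Xk k w - X w)^2)"
      proof (rule Bochner_Integration.integrable_bound)
        show "integrable M (\<lambda>w. 2 * (Xk k w)^2 + 2 * (X w)^2)"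
          using L2F(2)[OF X] L2F(2)[OF Yk] by auto
        show "(\<lambda>w. (Xk k w - X w)^2) \<in> borel_measurable M" by measurable
        show "AE x in M. norm ((Xk k x - X x)^2) \<le> norm (2 * (Xk k x)^2 + 2 * (X x)^2)"
          using sq_diff_le by (auto intro!: AE_I2)
      qed
      have "MAXVAR n M X - MAXVAR n M (Xk k)
          = integral\<^sup>L ?P (\<lambda>\<omega>. Max ((\<lambda>i. X (\<omega> i)) ` {..<n}) - Max ((\<lambda>i. Xk k (\<omega> i)) ` {..<n}))"
        using max_integrable[OF assms(1) n0(1) Xm Xi] max_integrable[OF assms(1) n0(1) Ym Yi]
        by (simp add: maxvar_eq[OF assms(1) Xm] maxvar_eq[OF assms(1) Ym])
      also have "\<dots> \<le> integral\<^sup>L ?P (\<lambda>\<omega>. \<Sum>i\<in>{..<n}. \<bar>Xk k (\<omega> i) - X (\<omega> i)\<bar>)"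
      proof (rule integral_mono)
        show "integrable ?P (\<lambda>\<omega>. Max ((\<lambda>i. X (\<omega> i)) ` {..<n}) - Max ((\<lambda>i. Xk k (\<omega> i)) ` {..<n}))"
          using max_integrable[OF assms(1) n0(1) Xm Xi] max_integrable[OF assms(1) n0(1) Ym Yi] by auto
        show "integrable ?P (\<lambda>\<omega>. \<Sum>i\<in>{..<n}. \<bar>Xk k (\<omega> i) - X (\<omega> i)\<bar>)"
          using comp_integral(2)[OF assms(1) _ _, of _ n "\<lambda>w. \<bar>Xk k w - X w\<bar>"] di by auto
        show "Max ((\<lambda>i. X (\<omega> i)) ` {..<n}) - Max ((\<lambda>i. Xk k (\<omega> i)) ` {..<n}) \<le> (\<Sum>i\<in>{..<n}. \<bar>Xk k (\<omega> i) - X (\<omega> i)\<bar>)" for \<omega>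
          using Max_abs_diff_le[of "{..<n}" "\<lambda>i. Xk k (\<omega> i)" "\<lambda>i. X (\<omega> i)"] n0 by auto
      qed
      also have "\<dots> = (\<Sum>i\<in>{..<n}. integral\<^sup>L ?P (\<lambda>\<omega>. \<bar>Xk k (\<omega> i) - X (\<omega> i)\<bar>))"
        by (rule Bochner_Integration.integral_sum)
          (use comp_integral(2)[OF assms(1) _ _, of _ n "\<lambda>w. \<bar>Xk k w - X w\<bar>"] di in auto)
      also have "\<dots> = (\<Sum>i\<in>{..<n}. integral\<^sup>L M (\<lambda>w. \<bar>Xk k w - X w\<bar>))"
        by (intro sum.cong refl) (use comp_integral(1)[OF assms(1) _ _, of _ n "\<lambda>w. \<bar>Xk k w - X w\<bar>"] in auto)
      also have "\<dots> = real n * integral\<^sup>L M (\<lambda>w. \<bar>Xk k w - X w\<bar>)" by simp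
      also have "\<dots> \<le> real n * sqrt (integral\<^sup>L M (\<lambda>w. (Xk k w - X w)^2))"
        using L1_le_L2[OF assms(1) dm sqi] by (intro mult_left_mono) auto
      finally show ?thesis using H by (smt (verit))
    qed
    have "(\<lambda>k. real n * sqrt (integral\<^sup>L M (\<lambda>w. (Xk k w - X w)^2))) \<longlonglongrightarrow> real n * 0"
      using H by (intro tendsto_mult tendsto_const) auto
    then have lim: "(\<lambda>k. real n * sqrt (integral\<^sup>L M (\<lambda>w. (Xk k w - X w)^2))) \<longlonglongrightarrow> 0" by simp
    show "MAXVAR n M X \<le> 0"
      by (rule LIMSEQ_le_const[OF lim]) (use bound in auto)
  qed
  have A6: "\<forall>X\<in>L2 M. \<not> (\<exists>c. AE w in M. X w = c) \<longrightarrow> MAXVAR n M X > integral\<^sup>L M X"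
  proof (intro ballI impI)
    fix X assume X: "X \<in> L2 M" and nc: "\<not> (\<exists>c. AE w in M. X w = c)"
    note Xm[measurable] = L2F(1)[OF X]
    have Xi: "integrable M X" using L2F(3) X by auto
    have X2i: "integrable M (\<lambda>w. (X w)^2)" using L2F(2) X by auto
    define E where "E = integral\<^sup>L M X"
    define E2 where "E2 = integral\<^sup>L M (\<lambda>w. (X w)^2)"
    have PS: "product_sigma_finite (\<lambda>_::nat. M)"
      using product_prob_spaceI[of "\<lambda>_::nat. M"] assms(1) by (simp add: product_prob_space_def)
    have i01: "0 < n" "1 < n" using assms(2) by auto
    note ci = comp_integral[OF assms(1)]
    have Z0i: "integrable ?P (\<lambda>\<omega>. X (\<omega> 0))" "integrable ?P (\<lambda>\<omega>. X (\<omega> 1))"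
      using ci(2)[OF i01(1) Xm] ci(2)[OF i01(2) Xm] Xi by auto
    have Z0s: "integrable ?P (\<lambda>\<omega>. (X (\<omega> 0))^2)" "integrable ?P (\<lambda>\<omega>. (X (\<omega> 1))^2)"
      using ci(2)[OF i01(1), of "\<lambda>w. (X w)^2"] ci(2)[OF i01(2), of "\<lambda>w. (X w)^2"] X2i by auto
    have Z0e: "integral\<^sup>L ?P (\<lambda>\<omega>. X (\<omega> 0)) = E" "integral\<^sup>L ?P (\<lambda>\<omega>. X (\<omega> 1)) = E"
      using ci(1)[OF i01(1) Xm] ci(1)[OF i01(2) Xm] by (auto simp: E_def)
    have Z0se: "integral\<^sup>L ?P (\<lambda>\<omega>. (X (\<omega> 0))^2) = E2" "integral\<^sup>L ?P (\<lambda>\<omega>. (X (\<omega> 1))^2) = E2"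
      using ci(1)[OF i01(1), of "\<lambda>w. (X w)^2"] ci(1)[OF i01(2), of "\<lambda>w. (X w)^2"] by (auto simp: E2_def)
    define f where "f = (\<lambda>i::nat. if i < 2 then X else (\<lambda>_. 1::real))"
    have fi: "\<And>i. i \<in> {..<n} \<Longrightarrow> integrable M (f i)" using Xi by (auto simp: f_def)
    have prodeq: "(\<Prod>i\<in>{..<n}. f i (\<omega> i)) = X (\<omega> 0) * X (\<omega> 1)" for \<omega>
    proof -
      have "(\<Prod>i\<in>{..<n}. f i (\<omega> i)) = (\<Prod>i\<in>{..<2}. f i (\<omega> i))"
        by (rule prod.mono_neutral_cong_right) (use assms(2) in \<open>auto simp: f_def\<close>)
      also have "\<dots> = X (\<omega> 0) * X (\<omega> 1)" by (simp add: f_def numeral_2_eq_2)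
      finally show ?thesis .
    qed
    have prodeq2: "(\<Prod>i\<in>{..<n}. integral\<^sup>L M (f i)) = E * E"
    proof -
      have "(\<Prod>i\<in>{..<n}. integral\<^sup>L M (f i)) = (\<Prod>i\<in>{..<2}. integral\<^sup>L M (f i))"
        by (rule prod.mono_neutral_cong_right) (use assms(2) in \<open>auto simp: f_def prob_space\<close>)
      also have "\<dots> = E * E" by (simp add: f_def numeral_2_eq_2 E_def)
      finally show ?thesis .
    qed
    have Z01i: "integrable ?P (\<lambda>\<omega>. X (\<omega> 0) * X (\<omega> 1))"
      using product_sigma_finite.product_integrable_prod[OF PS, of "{..<n}" f] fi by (simp add: prodeq)
    have Z01e: "integral\<^sup>L ?P (\<lambda>\<omega>. X (\<omega> 0) * X (\<omega> 1)) = E * E"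
      using product_sigma_finite.product_integral_prod[OF PS, of "{..<n}" f] fi by (simp add: prodeq prodeq2)
    have dm[measurable]: "(\<lambda>\<omega>. X (\<omega> 0) - X (\<omega> 1)) \<in> borel_measurable ?P"
      using comp_meas[OF i01(1) Xm] comp_meas[OF i01(2) Xm] by measurable
    have dsqi: "integrable ?P (\<lambda>\<omega>. (X (\<omega> 0) - X (\<omega> 1))^2)"
      using Z0s Z01i by (simp add: power2_diff mult.assoc)
    have dsqe: "integral\<^sup>L ?P (\<lambda>\<omega>. (X (\<omega> 0) - X (\<omega> 1))^2) = 2 * (E2 - E * E)"
      using Z0s Z01i Z0se Z01e by (simp add: power2_diff mult.assoc)
    have vareq: "integral\<^sup>L M (\<lambda>w. (X w - E)^2) = E2 - E * E"
    proof -
      have "integral\<^sup>L M (\<lambda>w. (X w - E)^2) = integral\<^sup>L M (\<lambda>w. (X w)^2 - 2 * E * X w + E^2)"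
        by (intro Bochner_Integration.integral_cong refl) (simp add: power2_diff)
      also have "\<dots> = E2 - E * E"
        using X2i Xi by (simp add: E_def E2_def prob_space power2_eq_square)
      finally show ?thesis .
    qed
    have varpos: "E2 - E * E > 0"
    proof -
      have vi: "integrable M (\<lambda>w. (X w - E)^2)" using X2i Xi by (simp add: power2_diff)
      have "integral\<^sup>L M (\<lambda>w. (X w - E)^2) \<noteq> 0"
      proof
        assume "integral\<^sup>L M (\<lambda>w. (X w - E)^2) = 0"
        then have "AE w in M. (X w - E)^2 = 0"
          using integral_nonneg_eq_0_iff_AE[OF vi] by auto
        then have "AE w in M. X w = E" by eventually_elim simp
        then show False using nc by blast
      qed
      moreover have "integral\<^sup>L M (\<lambda>w. (X w - E)^2) \<ge> 0" by simp
      ultimately show ?thesis using vareq by linarith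
    qed
    have adi: "integrable ?P (\<lambda>\<omega>. \<bar>X (\<omega> 0) - X (\<omega> 1)\<bar>)" using Z0i by auto
    have adpos: "integral\<^sup>L ?P (\<lambda>\<omega>. \<bar>X (\<omega> 0) - X (\<omega> 1)\<bar>) > 0"
    proof -
      have "integral\<^sup>L ?P (\<lambda>\<omega>. \<bar>X (\<omega> 0) - X (\<omega> 1)\<bar>) \<noteq> 0"
      proof
        assume "integral\<^sup>L ?P (\<lambda>\<omega>. \<bar>X (\<omega> 0) - X (\<omega> 1)\<bar>) = 0"
        then have "AE \<omega> in ?P. \<bar>X (\<omega> 0) - X (\<omega> 1)\<bar> = 0"
          using integral_nonneg_eq_0_iff_AE[OF adi] by auto
        then have "AE \<omega> in ?P. (X (\<omega> 0) - X (\<omega> 1))^2 = 0" by eventually_elim simp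
        then have "integral\<^sup>L ?P (\<lambda>\<omega>. (X (\<omega> 0) - X (\<omega> 1))^2) = integral\<^sup>L ?P (\<lambda>\<omega>. 0::real)"
          by (intro integral_cong_AE) (use dsqi in auto)
        then show False using dsqe varpos by simp
      qed
      moreover have "integral\<^sup>L ?P (\<lambda>\<omega>. \<bar>X (\<omega> 0) - X (\<omega> 1)\<bar>) \<ge> 0" by simp
      ultimately show ?thesis by linarith
    qed
    have "integral\<^sup>L ?P (\<lambda>\<omega>. (X (\<omega> 0) + X (\<omega> 1)) / 2 + \<bar>X (\<omega> 0) - X (\<omega> 1)\<bar> / 2)
        \<le> integral\<^sup>L ?P (\<lambda>\<omega>. Max ((\<lambda>i. X (\<omega> i)) ` {..<n}))"
    proof (rule integral_mono)
      show "integrable ?P (\<lambda>\<omega>. (X (\<omega> 0) + X (\<omega> 1)) / 2 + \<bar>X (\<omega> 0) - X (\<omega> 1)\<bar> / 2)"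
        using Z0i adi by auto
      show "integrable ?P (\<lambda>\<omega>. Max ((\<lambda>i. X (\<omega> i)) ` {..<n}))"
        by (rule max_integrable[OF assms(1) n0(1) Xm Xi])
      show "(X (\<omega> 0) + X (\<omega> 1)) / 2 + \<bar>X (\<omega> 0) - X (\<omega> 1)\<bar> / 2 \<le> Max ((\<lambda>i. X (\<omega> i)) ` {..<n})" for \<omega>
      proof -
        have "X (\<omega> 0) \<le> Max ((\<lambda>i. X (\<omega> i)) ` {..<n})" "X (\<omega> 1) \<le> Max ((\<lambda>i. X (\<omega> i)) ` {..<n})"
          using i01 by auto
        then show ?thesis by (simp add: abs_if field_simps)
      qed
    qed
    moreover have "integral\<^sup>L ?P (\<lambda>\<omega>. (X (\<omega> 0) + X (\<omega> 1)) / 2 + \<bar>X (\<omega> 0) - X (\<omega> 1)\<bar> / 2)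
        = E + integral\<^sup>L ?P (\<lambda>\<omega>. \<bar>X (\<omega> 0) - X (\<omega> 1)\<bar>) / 2"
      using Z0i adi Z0e by simp
    ultimately show "MAXVAR n M X > integral\<^sup>L M X"
      using adpos maxvar_eq[OF assms(1) Xm] by (simp add: E_def)
  qed
  show ?thesis using A1 A2 A4 A5 A6 by blast
qed

end
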